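(* Let $X\subseteq\mathbb{C}^n$ be a complex analytic variety, $x\in X$, $M$ an $\mathcal{O}_{X,x}$-submodule of $\mathcal{O}_{X,x}^p$, and $k\in\mathbb{N}$. Then: (a) $I_\Delta^k\, I_2((I_k(M))_D)\subseteq I_{2k}(M_D)$ at $(x,x)$; (b) if $I_k(M)$ is principal then $I_\Delta^{k-1}\, I_2((I_k(M))_D)\subseteq I_{2k}(M_D)$ at $(x,x)$.
   Context: $z_1,\dots,z_n$ are coordinates on $\mathbb{C}^n$, $\pi_1,\pi_2:X\times X\to X$ the projections, and $I_\Delta$ is the ideal of $\mathcal{O}_{X\times X,(x,x)}$ generated by $z_i\circ\pi_1-z_i\circ\pi_2$, $i=1,\dots,n$. For $h$ in $\mathcal{O}_{X,x}^p$ or $\mathcal{O}_{X,x}$, $h_D=(h\circ\pi_1,h\circ\pi_2)$; for a module or ideal $N$, $N_D$ is the submodule over $\mathcal{O}_{X\times X,(x,x)}$ generated by $\{h_D:h\in N\}$. $I_j(N)$ is the ideal of $j\times j$ minors of a matrix of generators of $N$. *)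

theory Defs
  imports "HOL-Analysis.Analysis" "HOL-Combinatorics.Permutations"
begin

text \<open>Germs of holomorphic functions on C^n are represented by functions
 complex^'n => complex that are holomorphic on a neighbourhood of the base point.\<close>

definition holo :: "complex^'n::finite \<Rightarrow> (complex^'n \<Rightarrow> complex) \<Rightarrow> bool" where
  "holo x f \<longleftrightarrow> (\<exists>U. open U \<and> x \<in> U \<and>
     (\<forall>y\<in>U. \<exists>D. (f has_derivative D) (at y) \<and> (\<forall>c v. D (c *s v) = c * D v)))"


definition holo_vec :: "complex^'n::finite \<Rightarrow> (complex^'n \<Rightarrow> complex^'q::finite) \<Rightarrow> bool" where
  "holo_vec x f \<longleftrightarrow> (\<forall>i. holo x (\<lambda>y. f y $ i))"

definition analytic_variety :: "(complex^'n::finite) set \<Rightarrow> bool" where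
  "analytic_variety X \<longleftrightarrow> (\<exists>\<Omega>. open \<Omega> \<and> X \<subseteq> \<Omega> \<and>
     (\<forall>y\<in>\<Omega>. \<exists>U F. open U \<and> y \<in> U \<and> U \<subseteq> \<Omega> \<and> finite F \<and>
        (\<forall>f\<in>F. \<forall>z\<in>U. holo z f) \<and> X \<inter> U = {z\<in>U. \<forall>f\<in>F. f z = 0}))"

definition germ_eq :: "(complex^'n::finite) set \<Rightarrow> complex^'n \<Rightarrow> (complex^'n \<Rightarrow> 'b) \<Rightarrow> (complex^'n \<Rightarrow> 'b) \<Rightarrow> bool" where
  "germ_eq X x f g \<longleftrightarrow> (\<exists>U. open U \<and> x \<in> U \<and> (\<forall>y\<in>X \<inter> U. f y = g y))"

text \<open>Ideal of O_{X,x} generated by a set of germs (as set of representatives).\<close>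
definition gen_ideal :: "(complex^'n::finite) set \<Rightarrow> complex^'n \<Rightarrow> (complex^'n \<Rightarrow> complex) set \<Rightarrow> (complex^'n \<Rightarrow> complex) set" where
  "gen_ideal X x S = {f. holo x f \<and> (\<exists>(m::nat) a s. (\<forall>i<m. holo x (a i) \<and> s i \<in> S) \<and>
       germ_eq X x f (\<lambda>y. \<Sum>i<m. a i y * s i y))}"

definition gen_module :: "(complex^'n::finite) set \<Rightarrow> complex^'n \<Rightarrow> (complex^'n \<Rightarrow> complex^'q::finite) set \<Rightarrow> (complex^'n \<Rightarrow> complex^'q) set" where
  "gen_module X x S = {f. holo_vec x f \<and> (\<exists>(m::nat) a s. (\<forall>i<m. holo x (a i) \<and> s i \<in> S) \<and>
       germ_eq X x f (\<lambda>y. \<Sum>i<m. a i y *s s i y))}"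

definition is_submodule :: "(complex^'n::finite) set \<Rightarrow> complex^'n \<Rightarrow> (complex^'n \<Rightarrow> complex^'q::finite) set \<Rightarrow> bool" where
  "is_submodule X x M \<longleftrightarrow> M = gen_module X x M"

definition principal_ideal :: "(complex^'n::finite) set \<Rightarrow> complex^'n \<Rightarrow> (complex^'n \<Rightarrow> complex) set \<Rightarrow> bool" where
  "principal_ideal X x I \<longleftrightarrow> (\<exists>g. holo x g \<and> I = gen_ideal X x {g})"

definition detk :: "nat \<Rightarrow> (nat \<Rightarrow> nat \<Rightarrow> complex) \<Rightarrow> complex" where
  "detk k A = (\<Sum>\<sigma>\<in>{\<sigma>. \<sigma> permutes {..<k}}. of_int (sign \<sigma>) * (\<Prod>i<k. A i (\<sigma> i)))"

text \<open>I_k(M): ideal generated by the k x k minors of a matrix whose columns are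
  elements of M (rows r, columns c; repeated rows/columns give zero minors).\<close>
definition minor_ideal :: "(complex^'n::finite) set \<Rightarrow> complex^'n \<Rightarrow> nat \<Rightarrow> (complex^'n \<Rightarrow> complex^'q::finite) set \<Rightarrow> (complex^'n \<Rightarrow> complex) set" where
  "minor_ideal X x k M = gen_ideal X x
     {(\<lambda>y. detk k (\<lambda>i j. c j y $ r i)) | c r. (\<forall>j<k. c j \<in> M)}"

definition ideal_mult :: "(complex^'n::finite) set \<Rightarrow> complex^'n \<Rightarrow> (complex^'n \<Rightarrow> complex) set \<Rightarrow> (complex^'n \<Rightarrow> complex) set \<Rightarrow> (complex^'n \<Rightarrow> complex) set" where
  "ideal_mult X x I J = gen_ideal X x {(\<lambda>y. f y * g y) | f g. f \<in> I \<and> g \<in> J}"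

fun ideal_pow :: "(complex^'n::finite) set \<Rightarrow> complex^'n \<Rightarrow> (complex^'n \<Rightarrow> complex) set \<Rightarrow> nat \<Rightarrow> (complex^'n \<Rightarrow> complex) set" where
  "ideal_pow X x I 0 = gen_ideal X x {(\<lambda>y. 1)}"
| "ideal_pow X x I (Suc m) = ideal_mult X x (ideal_pow X x I m) I"

text \<open>C^n x C^n is modelled as complex^('n+'n); projections pi_1, pi_2.\<close>
definition pr1 :: "complex^('n::finite + 'n) \<Rightarrow> complex^'n" where
  "pr1 z = (\<chi> i. z $ Inl i)"
definition pr2 :: "complex^('n::finite + 'n) \<Rightarrow> complex^'n" where
  "pr2 z = (\<chi> i. z $ Inr i)"

definition dbl :: "(complex^'n::finite) set \<Rightarrow> (complex^('n + 'n)) set" where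
  "dbl X = {z. pr1 z \<in> X \<and> pr2 z \<in> X}"

definition dpt :: "complex^'n::finite \<Rightarrow> complex^('n + 'n)" where
  "dpt x = (\<chi> j. case j of Inl i \<Rightarrow> x $ i | Inr i \<Rightarrow> x $ i)"

definition I_Delta :: "(complex^'n::finite) set \<Rightarrow> complex^'n \<Rightarrow> (complex^('n+'n) \<Rightarrow> complex) set" where
  "I_Delta X x = gen_ideal (dbl X) (dpt x) {(\<lambda>z. z $ Inl i - z $ Inr i) | i. True}"

definition vecD :: "(complex^'n::finite \<Rightarrow> complex^'q::finite) \<Rightarrow> complex^('n+'n) \<Rightarrow> complex^('q+'q)" where
  "vecD h z = (\<chi> j. case j of Inl i \<Rightarrow> h (pr1 z) $ i | Inr i \<Rightarrow> h (pr2 z) $ i)"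

definition mod_D :: "(complex^'n::finite) set \<Rightarrow> complex^'n \<Rightarrow> (complex^'n \<Rightarrow> complex^'q::finite) set \<Rightarrow> (complex^('n+'n) \<Rightarrow> complex^('q+'q)) set" where
  "mod_D X x N = gen_module (dbl X) (dpt x) (vecD ` N)"

definition as_module :: "(complex^'n::finite \<Rightarrow> complex) set \<Rightarrow> (complex^'n \<Rightarrow> complex^1) set" where
  "as_module I = {(\<lambda>y. \<chi> _. f y) | f. f \<in> I}"

end

theory Submission
  imports Defs "Jordan_Normal_Form.Determinant"
begin

lemma detk_det: "detk n A = Determinant.det (Matrix.mat n n (\<lambda>(i,j). A i j))"
  unfolding detk_def Determinant.det_def by (simp add: atLeast0LessThan)

lemma perms2: "{\<sigma>. \<sigma> permutes {..<2::nat}} = {id, Transposition.transpose 0 1}"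
proof safe
  fix \<sigma> assume p: "\<sigma> permutes {..<2::nat}" and n: "\<sigma> \<notin> {}" "\<sigma> \<noteq> id"
  have s2: "{..<2::nat} = {0,1}" by auto
  have out: "\<And>i. i \<ge> 2 \<Longrightarrow> \<sigma> i = i" using p by (auto simp: permutes_def)
  have b: "bij_betw \<sigma> {0,1} {0,1}" using permutes_imp_bij[OF p] s2 by simp
  have "\<sigma> 0 \<in> {0,1}" "\<sigma> 1 \<in> {0,1}" using b by (auto simp: bij_betw_def)
  moreover have "\<sigma> 0 \<noteq> \<sigma> 1" using b by (auto simp: bij_betw_def inj_on_def)
  moreover have "\<not> (\<sigma> 0 = 0 \<and> \<sigma> 1 = 1)"
  proof
    assume "\<sigma> 0 = 0 \<and> \<sigma> 1 = 1"
    then have "\<sigma> i = i" for i using out[of i] by (cases "i < 2") (auto simp: less_2_cases_iff)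
    then show False using n(2) by auto
  qed
  ultimately have "\<sigma> 0 = 1" "\<sigma> 1 = 0" by auto
  show "\<sigma> = Transposition.transpose 0 1"
  proof (rule ext)
    fix i show "\<sigma> i = Transposition.transpose 0 1 i"
      using out[of i] \<open>\<sigma> 0 = 1\<close> \<open>\<sigma> 1 = 0\<close>
      by (cases "i = 0"; cases "i = 1") (auto simp: transpose_def)
  qed
next
  show "id permutes {..<2::nat}" by (simp add: permutes_id)
  show "Transposition.transpose 0 1 permutes {..<2::nat}" by (rule permutes_swap_id) auto
qed

lemma detk2: "detk 2 A = A 0 0 * A 1 1 - A 0 1 * A 1 0"
proof -
  have ne: "id \<noteq> Transposition.transpose (0::nat) 1"
    by (metis id_apply transpose_apply_first zero_neq_one)
  show ?thesis unfolding detk_def perms2 using ne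
    by (simp add: sign_swap_id numeral_2_eq_2 lessThan_Suc)
qed

lemma detk_scale_cols: "detk k (\<lambda>i j. d j * B i j) = (\<Prod>j<k. d j) * detk k B"
proof -
  have "(\<Prod>i<k. d (\<sigma> i) * B i (\<sigma> i)) = (\<Prod>j<k. d j) * (\<Prod>i<k. B i (\<sigma> i))"
    if "\<sigma> permutes {..<k}" for \<sigma>
    using prod.permute[OF that, of d] by (simp add: prod.distrib comp_def)
  then show ?thesis unfolding detk_def by (simp add: sum_distrib_left mult_ac)
qed

lemma detk_block:
  assumes z: "\<And>i j. k \<le> i \<Longrightarrow> i < k+m \<Longrightarrow> j < k \<Longrightarrow> A i j = 0"
  shows "detk (k+m) A = detk k A * detk m (\<lambda>i j. A (k+i) (k+j))"
proof -
  let ?A1 = "Matrix.mat k k (\<lambda>(i,j). A i j)"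
  let ?A2 = "Matrix.mat k m (\<lambda>(i,j). A i (k+j))"
  let ?A3 = "0\<^sub>m m k :: complex Matrix.mat"
  let ?A4 = "Matrix.mat m m (\<lambda>(i,j). A (k+i) (k+j))"
  have eq: "Matrix.mat (k+m) (k+m) (\<lambda>(i,j). A i j) = four_block_mat ?A1 ?A2 ?A3 ?A4"
    by (rule eq_matI) (auto simp: four_block_mat_def z)
  show ?thesis unfolding detk_det eq
    by (rule det_four_block_mat_lower_left_zero) auto
qed

section \<open>Holomorphic germs\<close>

lemma holo_const[simp]: "holo x (\<lambda>y. c)"
  unfolding holo_def by (rule exI[of _ UNIV]) (auto intro!: exI[of _ "\<lambda>_. 0"])

lemma holo_add:
  assumes "holo x f" "holo x g" shows "holo x (\<lambda>y. f y + g y)"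
proof -
  obtain U where U: "open U" "x \<in> U" "\<forall>y\<in>U. \<exists>D. (f has_derivative D) (at y) \<and> (\<forall>c v. D (c *s v) = c * D v)"
    using assms(1) unfolding holo_def by blast
  obtain V where V: "open V" "x \<in> V" "\<forall>y\<in>V. \<exists>D. (g has_derivative D) (at y) \<and> (\<forall>c v. D (c *s v) = c * D v)"
    using assms(2) unfolding holo_def by blast
  show ?thesis unfolding holo_def
  proof (intro exI[of _ "U \<inter> V"] conjI ballI)
    fix y assume "y \<in> U \<inter> V"
    then obtain D1 D2 where "(f has_derivative D1) (at y)" "\<forall>c v. D1 (c *s v) = c * D1 v"
      "(g has_derivative D2) (at y)" "\<forall>c v. D2 (c *s v) = c * D2 v" using U V by blast
    then show "\<exists>D. ((\<lambda>y. f y + g y) has_derivative D) (at y) \<and> (\<forall>c v. D (c *s v) = c * D v)"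
      by (intro exI[of _ "\<lambda>v. D1 v + D2 v"]) (auto intro: has_derivative_add simp: distrib_left)
  qed (use U V in auto)
qed

lemma holo_mult:
  assumes "holo x f" "holo x g" shows "holo x (\<lambda>y. f y * g y)"
proof -
  obtain U where U: "open U" "x \<in> U" "\<forall>y\<in>U. \<exists>D. (f has_derivative D) (at y) \<and> (\<forall>c v. D (c *s v) = c * D v)"
    using assms(1) unfolding holo_def by blast
  obtain V where V: "open V" "x \<in> V" "\<forall>y\<in>V. \<exists>D. (g has_derivative D) (at y) \<and> (\<forall>c v. D (c *s v) = c * D v)"
    using assms(2) unfolding holo_def by blast
  show ?thesis unfolding holo_def
  proof (intro exI[of _ "U \<inter> V"] conjI ballI)
    fix y assume "y \<in> U \<inter> V"
    then obtain D1 D2 where "(f has_derivative D1) (at y)" "\<forall>c v. D1 (c *s v) = c * D1 v"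
      "(g has_derivative D2) (at y)" "\<forall>c v. D2 (c *s v) = c * D2 v" using U V by blast
    then show "\<exists>D. ((\<lambda>y. f y * g y) has_derivative D) (at y) \<and> (\<forall>c v. D (c *s v) = c * D v)"
    proof (intro exI conjI)
      show "((\<lambda>y. f y * g y) has_derivative (\<lambda>v. f y * D2 v + D1 v * g y)) (at y)"
        by (rule has_derivative_mult) fact+
    qed (auto simp: algebra_simps)
  qed (use U V in auto)
qed

lemma holo_coord[simp]: "holo x (\<lambda>y. vec_nth y i)"
  unfolding holo_def
  by (rule exI[of _ UNIV]) (auto intro!: exI[of _ "\<lambda>v. vec_nth v i"] bounded_linear.has_derivative[OF bounded_linear_vec_nth])

lemma holo_neg: "holo x f \<Longrightarrow> holo x (\<lambda>y. - f y)"
  using holo_mult[OF holo_const[of x "-1"], of f] by simp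

lemma holo_diff: "holo x f \<Longrightarrow> holo x g \<Longrightarrow> holo x (\<lambda>y. f y - g y)"
  using holo_add[OF _ holo_neg, of x f g] by simp

lemma holo_sum: "finite A \<Longrightarrow> (\<And>i. i \<in> A \<Longrightarrow> holo x (f i)) \<Longrightarrow> holo x (\<lambda>y. \<Sum>i\<in>A. f i y)"
  by (induction A rule: finite_induct) (auto intro: holo_add)

lemma holo_prod: "finite A \<Longrightarrow> (\<And>i. i \<in> A \<Longrightarrow> holo x (f i)) \<Longrightarrow> holo x (\<lambda>y. \<Prod>i\<in>A. f i y)"
  by (induction A rule: finite_induct) (auto intro: holo_mult)

lemma holo_comp_lin:
  assumes L: "bounded_linear L" "\<And>c v. L (c *s v) = c *s L v" and h: "holo (L z) f"
  shows "holo z (\<lambda>w. f (L w))"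
proof -
  obtain U where U: "open U" "L z \<in> U" "\<forall>y\<in>U. \<exists>D. (f has_derivative D) (at y) \<and> (\<forall>c v. D (c *s v) = c * D v)"
    using h unfolding holo_def by blast
  have "continuous_on UNIV L" using L(1) by (simp add: linear_continuous_on)
  then have o: "open (L -` U)" using U(1) by (simp add: open_vimage)
  show ?thesis unfolding holo_def
  proof (intro exI[of _ "L -` U"] conjI ballI)
    fix y assume "y \<in> L -` U"
    then obtain D where "(f has_derivative D) (at (L y))" "\<forall>c v. D (c *s v) = c * D v" using U by blast
    then show "\<exists>D. ((\<lambda>w. f (L w)) has_derivative D) (at y) \<and> (\<forall>c v. D (c *s v) = c * D v)"
      using L by (intro exI[of _ "\<lambda>v. D (L v)"])
        (auto intro: has_derivative_compose[OF bounded_linear.has_derivative[OF L(1)]])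
  qed (use U o in auto)
qed

lemma bl_pr1: "bounded_linear (pr1 :: complex^('n::finite+'n) \<Rightarrow> complex^'n)"
proof -
  have "linear (pr1 :: complex^('n::finite+'n) \<Rightarrow> complex^'n)"
    by (rule linearI) (simp_all add: pr1_def Finite_Cartesian_Product.vec_eq_iff)
  then show ?thesis by (simp add: linear_conv_bounded_linear)
qed
lemma bl_pr2: "bounded_linear (pr2 :: complex^('n::finite+'n) \<Rightarrow> complex^'n)"
proof -
  have "linear (pr2 :: complex^('n::finite+'n) \<Rightarrow> complex^'n)"
    by (rule linearI) (simp_all add: pr2_def Finite_Cartesian_Product.vec_eq_iff)
  then show ?thesis by (simp add: linear_conv_bounded_linear)
qed
lemma pr1_smult: "pr1 (c *s v) = c *s pr1 v" by (simp add: pr1_def Finite_Cartesian_Product.vec_eq_iff)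
lemma pr2_smult: "pr2 (c *s v) = c *s pr2 v" by (simp add: pr2_def Finite_Cartesian_Product.vec_eq_iff)
lemma pr1_dpt[simp]: "pr1 (dpt x) = x" by (simp add: pr1_def dpt_def Finite_Cartesian_Product.vec_eq_iff)
lemma pr2_dpt[simp]: "pr2 (dpt x) = x" by (simp add: pr2_def dpt_def Finite_Cartesian_Product.vec_eq_iff)

lemma holo_pr1: "holo (pr1 z) f \<Longrightarrow> holo z (\<lambda>w. f (pr1 w))"
  by (rule holo_comp_lin[OF bl_pr1 pr1_smult])
lemma holo_pr2: "holo (pr2 z) f \<Longrightarrow> holo z (\<lambda>w. f (pr2 w))"
  by (rule holo_comp_lin[OF bl_pr2 pr2_smult])

lemma germ_eq_refl[simp]: "germ_eq X x f f"
  unfolding germ_eq_def by (rule exI[of _ UNIV]) auto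

lemma germ_eq_pointwise: "(\<And>y. f y = g y) \<Longrightarrow> germ_eq X x f g"
  unfolding germ_eq_def by (rule exI[of _ UNIV]) auto

lemma germ_eq_sym: "germ_eq X x f g \<Longrightarrow> germ_eq X x g f"
  unfolding germ_eq_def by metis

lemma germ_eq_trans: "germ_eq X x f g \<Longrightarrow> germ_eq X x g h \<Longrightarrow> germ_eq X x f h"
  unfolding germ_eq_def
  by (metis (no_types, lifting) IntD1 IntD2 IntI open_Int)

lemma germ_eq_cong2: "germ_eq X x f f' \<Longrightarrow> germ_eq X x g g' \<Longrightarrow>
   germ_eq X x (\<lambda>y. h (f y) (g y)) (\<lambda>y. h (f' y) (g' y))"
  unfolding germ_eq_def
  by (metis (no_types, lifting) IntD1 IntD2 IntI open_Int)

lemma germ_eq_sum: "finite A \<Longrightarrow> (\<And>i. i \<in> A \<Longrightarrow> germ_eq X x (f i) (g i)) \<Longrightarrow>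
   germ_eq X x (\<lambda>y. \<Sum>i\<in>A. f i y) (\<lambda>y. \<Sum>i\<in>A. g i y)"
proof (induction A rule: finite_induct)
  case empty then show ?case by simp
next
  case (insert a A)
  then have "germ_eq X x (\<lambda>y. f a y + (\<Sum>i\<in>A. f i y)) (\<lambda>y. g a y + (\<Sum>i\<in>A. g i y))"
    by (intro germ_eq_cong2[where h="(+)"]) auto
  then show ?case using insert by simp
qed

lemma sum_lessThan_add: "(\<Sum>i<m+(n::nat). F i) = (\<Sum>i<m. F i) + (\<Sum>i<n. F (m+i))"
  by (induction n) (auto simp: add_ac)

section \<open>Generated ideals\<close>

lemma gi_holo: "f \<in> gen_ideal X x S \<Longrightarrow> holo x f"
  unfolding gen_ideal_def by auto

lemma gi_gen: "s \<in> S \<Longrightarrow> holo x s \<Longrightarrow> s \<in> gen_ideal X x S"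
  unfolding gen_ideal_def mem_Collect_eq
  apply (rule conjI, assumption)
  apply (rule exI[of _ "1::nat"])
  apply (rule exI[of _ "\<lambda>_ _. 1"])
  apply (rule exI[of _ "\<lambda>_. s"])
  by auto

lemma gi_zero: "(\<lambda>y. 0) \<in> gen_ideal X x S"
  unfolding gen_ideal_def by (auto intro!: exI[of _ "0::nat"])

lemma gi_germ: "holo x f \<Longrightarrow> germ_eq X x f g \<Longrightarrow> g \<in> gen_ideal X x S \<Longrightarrow> f \<in> gen_ideal X x S"
  unfolding gen_ideal_def using germ_eq_trans by blast

lemma gi_add:
  assumes f: "f \<in> gen_ideal X x S" and g: "g \<in> gen_ideal X x S"
  shows "(\<lambda>y. f y + g y) \<in> gen_ideal X x S"
proof -
  obtain m :: nat and a s where ms: "\<forall>i<m. holo x (a i) \<and> s i \<in> S" "germ_eq X x f (\<lambda>y. \<Sum>i<m. a i y * s i y)"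
    using f unfolding gen_ideal_def by blast
  obtain n :: nat and b t where nt: "\<forall>i<n. holo x (b i) \<and> t i \<in> S" "germ_eq X x g (\<lambda>y. \<Sum>i<n. b i y * t i y)"
    using g unfolding gen_ideal_def by blast
  define c where "c i = (if i < m then a i else b (i - m))" for i
  define u where "u i = (if i < m then s i else t (i - m))" for i
  have "germ_eq X x (\<lambda>y. f y + g y) (\<lambda>y. (\<Sum>i<m. a i y * s i y) + (\<Sum>i<n. b i y * t i y))"
    using ms(2) nt(2) by (rule germ_eq_cong2)
  also have "(\<lambda>y. (\<Sum>i<m. a i y * s i y) + (\<Sum>i<n. b i y * t i y)) = (\<lambda>y. \<Sum>i<m+n. c i y * u i y)"
    unfolding sum_lessThan_add c_def u_def by simp
  finally have "germ_eq X x (\<lambda>y. f y + g y) (\<lambda>y. \<Sum>i<m+n. c i y * u i y)" .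
  moreover have "\<forall>i<m+n. holo x (c i) \<and> u i \<in> S" using ms(1) nt(1) by (auto simp: c_def u_def)
  moreover have "holo x (\<lambda>y. f y + g y)" using f g by (intro holo_add gi_holo)
  ultimately show ?thesis unfolding gen_ideal_def by blast
qed

lemma gi_smult:
  assumes a: "holo x a" and f: "f \<in> gen_ideal X x S"
  shows "(\<lambda>y. a y * f y) \<in> gen_ideal X x S"
proof -
  obtain m :: nat and b s where ms: "\<forall>i<m. holo x (b i) \<and> s i \<in> S" "germ_eq X x f (\<lambda>y. \<Sum>i<m. b i y * s i y)"
    using f unfolding gen_ideal_def by blast
  have "germ_eq X x (\<lambda>y. a y * f y) (\<lambda>y. a y * (\<Sum>i<m. b i y * s i y))"
    using germ_eq_refl ms(2) by (rule germ_eq_cong2)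
  also have "(\<lambda>y. a y * (\<Sum>i<m. b i y * s i y)) = (\<lambda>y. \<Sum>i<m. (\<lambda>y. a y * b i y) y * s i y)"
    by (simp add: sum_distrib_left mult_ac)
  finally have "germ_eq X x (\<lambda>y. a y * f y) (\<lambda>y. \<Sum>i<m. (\<lambda>y. a y * b i y) y * s i y)" .
  moreover have "\<forall>i<m. holo x (\<lambda>y. a y * b i y) \<and> s i \<in> S" using ms(1) a by (auto intro: holo_mult)
  moreover have "holo x (\<lambda>y. a y * f y)" using gi_holo[OF f] a by (intro holo_mult)
  ultimately show ?thesis unfolding gen_ideal_def mem_Collect_eq
    apply -
    apply (rule conjI, blast)
    apply (rule exI[of _ m], rule exI[of _ "\<lambda>i y. a y * b i y"], rule exI[of _ s])
    by simp
qed

lemma gi_sum: "finite A \<Longrightarrow> (\<And>i. i \<in> A \<Longrightarrow> f i \<in> gen_ideal X x S) \<Longrightarrow>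
   (\<lambda>y. \<Sum>i\<in>A. f i y) \<in> gen_ideal X x S"
  by (induction A rule: finite_induct) (auto intro: gi_add gi_zero)

lemma gi_neg: "f \<in> gen_ideal X x S \<Longrightarrow> (\<lambda>y. - f y) \<in> gen_ideal X x S"
  using gi_smult[OF holo_const[of x "-1"]] by fastforce

lemma gi_diff: "f \<in> gen_ideal X x S \<Longrightarrow> g \<in> gen_ideal X x S \<Longrightarrow> (\<lambda>y. f y - g y) \<in> gen_ideal X x S"
  using gi_add[OF _ gi_neg, of f X x S g] by simp

lemma gi_sub:
  assumes "\<And>t. t \<in> T \<Longrightarrow> t \<in> gen_ideal X x S"
  shows "gen_ideal X x T \<subseteq> gen_ideal X x S"
proof
  fix f assume f: "f \<in> gen_ideal X x T"
  obtain m :: nat and a t where mt: "\<forall>i<m. holo x (a i) \<and> t i \<in> T" "germ_eq X x f (\<lambda>y. \<Sum>i<m. a i y * t i y)"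
    using f unfolding gen_ideal_def by blast
  have "(\<lambda>y. \<Sum>i<m. a i y * t i y) \<in> gen_ideal X x S"
    using mt(1) assms by (intro gi_sum gi_smult) auto
  then show "f \<in> gen_ideal X x S" using gi_germ[OF gi_holo[OF f] mt(2)] by blast
qed

lemma gi_mono: "S \<subseteq> S' \<Longrightarrow> gen_ideal X x S \<subseteq> gen_ideal X x S'"
  unfolding gen_ideal_def by blast

lemma gi_mult_right:
  assumes t: "holo x t" and st: "\<And>s. s \<in> S \<Longrightarrow> (\<lambda>y. s y * t y) \<in> gen_ideal X x R"
    and f: "f \<in> gen_ideal X x S"
  shows "(\<lambda>y. f y * t y) \<in> gen_ideal X x R"
proof -
  obtain m :: nat and a s where ms: "\<forall>i<m. holo x (a i) \<and> s i \<in> S" "germ_eq X x f (\<lambda>y. \<Sum>i<m. a i y * s i y)"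
    using f unfolding gen_ideal_def by blast
  have 1: "(\<lambda>y. \<Sum>i<m. a i y * (s i y * t y)) \<in> gen_ideal X x R"
  proof (rule gi_sum)
    fix i assume "i \<in> {..<m}"
    then have "holo x (a i)" "s i \<in> S" using ms(1) by auto
    then show "(\<lambda>y. a i y * (s i y * t y)) \<in> gen_ideal X x R" using st by (intro gi_smult[of x "a i" "\<lambda>y. s i y * t y"]) auto
  qed simp
  have 2: "germ_eq X x (\<lambda>y. f y * t y) (\<lambda>y. (\<Sum>i<m. a i y * s i y) * t y)"
    using ms(2) germ_eq_refl by (rule germ_eq_cong2)
  have 3: "(\<lambda>y. (\<Sum>i<m. a i y * s i y) * t y) = (\<lambda>y. \<Sum>i<m. a i y * (s i y * t y))"
    by (simp add: sum_distrib_right mult.assoc)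
  have 4: "holo x (\<lambda>y. f y * t y)" using gi_holo[OF f] t by (rule holo_mult)
  show ?thesis using gi_germ[OF 4 2] 1 3 by simp
qed

lemma gi_prod:
  assumes S: "\<And>s. s \<in> S \<Longrightarrow> holo x s" and T: "\<And>t. t \<in> T \<Longrightarrow> holo x t"
    and st: "\<And>s t. s \<in> S \<Longrightarrow> t \<in> T \<Longrightarrow> (\<lambda>y. s y * t y) \<in> gen_ideal X x R"
    and f: "f \<in> gen_ideal X x S" and g: "g \<in> gen_ideal X x T"
  shows "(\<lambda>y. f y * g y) \<in> gen_ideal X x R"
proof -
  have 1: "(\<lambda>y. f y * t y) \<in> gen_ideal X x R" if "t \<in> T" for t
    using gi_mult_right[OF T[OF that] st[OF _ that] f] .
  have "(\<lambda>y. g y * f y) \<in> gen_ideal X x R"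
    by (rule gi_mult_right[OF gi_holo[OF f] _ g]) (use 1 in \<open>simp add: mult.commute\<close>)
  then show ?thesis by (simp add: mult.commute)
qed

lemma germ_eq_comp: "germ_eq X x f g \<Longrightarrow> germ_eq X x (\<lambda>y. h (f y)) (\<lambda>y. h (g y))"
  using germ_eq_cong2[of X x f g f g "\<lambda>u v. h u"] by simp

lemma open_pr1: "open U \<Longrightarrow> open (pr1 -` U)"
  by (rule continuous_open_vimage, assumption, rule linear_continuous_at[OF bl_pr1])
lemma open_pr2: "open U \<Longrightarrow> open (pr2 -` U)"
  by (rule continuous_open_vimage, assumption, rule linear_continuous_at[OF bl_pr2])

lemma germ_eq_pr1:
  assumes "germ_eq X x f g"
  shows "germ_eq (dbl X) (dpt x) (\<lambda>z. f (pr1 z)) (\<lambda>z. g (pr1 z))"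
proof -
  obtain U where U: "open U" "x \<in> U" "\<forall>y\<in>X \<inter> U. f y = g y" using assms unfolding germ_eq_def by blast
  have "open (pr1 -` U)" using open_pr1 U(1) by blast
  then show ?thesis unfolding germ_eq_def using U
    by (intro exI[of _ "pr1 -` U"]) (auto simp: dbl_def)
qed

lemma germ_eq_pr2:
  assumes "germ_eq X x f g"
  shows "germ_eq (dbl X) (dpt x) (\<lambda>z. f (pr2 z)) (\<lambda>z. g (pr2 z))"
proof -
  obtain U where U: "open U" "x \<in> U" "\<forall>y\<in>X \<inter> U. f y = g y" using assms unfolding germ_eq_def by blast
  have "open (pr2 -` U)" using open_pr2 U(1) by blast
  then show ?thesis unfolding germ_eq_def using U
    by (intro exI[of _ "pr2 -` U"]) (auto simp: dbl_def)
qed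

lemma holo_pr1_dpt: "holo x f \<Longrightarrow> holo (dpt x) (\<lambda>z. f (pr1 z))"
  by (rule holo_pr1) simp
lemma holo_pr2_dpt: "holo x f \<Longrightarrow> holo (dpt x) (\<lambda>z. f (pr2 z))"
  by (rule holo_pr2) simp

lemma vecD_Inl[simp]: "vec_nth (vecD h z) (Inl i) = vec_nth (h (pr1 z)) i"
  by (simp add: vecD_def)
lemma vecD_Inr[simp]: "vec_nth (vecD h z) (Inr i) = vec_nth (h (pr2 z)) i"
  by (simp add: vecD_def)

lemma holo_vec_vecD: "holo_vec x h \<Longrightarrow> holo_vec (dpt x) (vecD h)"
  unfolding holo_vec_def
proof
  fix j assume h: "\<forall>i. holo x (\<lambda>y. vec_nth (h y) i)"
  show "holo (dpt x) (\<lambda>y. vec_nth (vecD h y) j)"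
    using h by (cases j) (auto intro: holo_pr1_dpt holo_pr2_dpt)
qed

lemma gm_holo: "f \<in> gen_module X x S \<Longrightarrow> holo_vec x f"
  unfolding gen_module_def by auto

lemma gm_intro:
  assumes "holo_vec x f" "\<forall>i<(m::nat). holo x (a i) \<and> s i \<in> S" "\<And>y. f y = (\<Sum>i<m. a i y *s s i y)"
  shows "f \<in> gen_module X x S"
  unfolding gen_module_def mem_Collect_eq
  apply (rule conjI, rule assms(1))
  apply (rule exI[of _ m], rule exI[of _ a], rule exI[of _ s])
  using assms(2,3) by (auto intro: germ_eq_pointwise)

lemma permutes_less: "\<sigma> permutes {..<k} \<Longrightarrow> i < k \<Longrightarrow> \<sigma> i < (k::nat)"
  by (metis lessThan_iff permutes_in_image)

lemma holo_detk:
  assumes "\<And>i j. i < k \<Longrightarrow> j < k \<Longrightarrow> holo x (\<lambda>y. A i j y)"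
  shows "holo x (\<lambda>y. detk k (\<lambda>i j. A i j y))"
  unfolding detk_def
  by (intro holo_sum holo_prod holo_mult holo_const)
     (auto intro!: assms simp: permutes_less finite_permutations)

definition mon :: "nat \<Rightarrow> (complex^('n::finite + 'n) \<Rightarrow> complex) set" where
  "mon j = {(\<lambda>z. \<Prod>l<j. vec_nth z (Inl (\<iota> l)) - vec_nth z (Inr (\<iota> l))) | \<iota>. True}"

lemma holo_mon: "s \<in> mon j \<Longrightarrow> holo y s"
  unfolding mon_def by (auto intro!: holo_prod holo_diff)

lemma pow_sub:
  fixes X :: "(complex^'n::finite) set"
  shows "ideal_pow (dbl X) (dpt x) (I_Delta X x) j \<subseteq> gen_ideal (dbl X) (dpt x) (mon j)"
proof (induction j)
  case 0
  have "(\<lambda>y. 1) \<in> (mon 0 :: (complex^('n + 'n) \<Rightarrow> complex) set)" unfolding mon_def by auto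
  then show ?case by (auto intro!: gi_mono)
next
  case (Suc j)
  show ?case unfolding ideal_pow.simps ideal_mult_def
  proof (rule gi_sub, clarify)
    fix f g assume f: "f \<in> ideal_pow (dbl X) (dpt x) (I_Delta X x) j" and g: "g \<in> I_Delta X x"
    show "(\<lambda>y. f y * g y) \<in> gen_ideal (dbl X) (dpt x) (mon (Suc j))"
    proof (rule gi_prod[OF _ _ _ _ g[unfolded I_Delta_def]])
      show "f \<in> gen_ideal (dbl X) (dpt x) (mon j)" using f Suc by blast
    next
      fix s t :: "complex^('n+'n) \<Rightarrow> complex" assume s: "s \<in> mon j" and t: "t \<in> {(\<lambda>z. vec_nth z (Inl i) - vec_nth z (Inr i)) |i. True}"
      obtain \<iota> where si: "s = (\<lambda>z. \<Prod>l<j. vec_nth z (Inl (\<iota> l)) - vec_nth z (Inr (\<iota> l)))"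
        using s unfolding mon_def by blast
      obtain i where ti: "t = (\<lambda>z. vec_nth z (Inl i) - vec_nth z (Inr i))" using t by blast
      let ?\<iota> = "\<iota>(j := i)"
      have "(\<lambda>y. s y * t y) = (\<lambda>z. \<Prod>l<Suc j. vec_nth z (Inl (?\<iota> l)) - vec_nth z (Inr (?\<iota> l)))"
        unfolding si ti by (auto simp: prod.lessThan_Suc intro!: prod.cong)
      moreover have "\<dots> \<in> mon (Suc j)" unfolding mon_def by blast
      ultimately show "(\<lambda>y. s y * t y) \<in> gen_ideal (dbl X) (dpt x) (mon (Suc j))"
        using holo_mon by (metis gi_gen)
    next
      fix s :: "complex^('n+'n) \<Rightarrow> complex" assume "s \<in> mon j" then show "holo (dpt x) s" by (rule holo_mon)
    next
      fix t :: "complex^('n+'n) \<Rightarrow> complex" assume "t \<in> {(\<lambda>z. vec_nth z (Inl i) - vec_nth z (Inr i)) |i. True}"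
      then show "holo (dpt x) t" by (auto intro!: holo_diff holo_coord)
    qed
  qed
qed

section \<open>The determinant core\<close>

lemma detk_cong: "(\<And>i j. i < k \<Longrightarrow> j < k \<Longrightarrow> A i j = B i j) \<Longrightarrow> detk k A = detk k B"
  unfolding detk_def by (intro sum.cong refl arg_cong2[where f="(*)"] prod.cong) (auto simp: permutes_less)

lemma holo_vec_diff: "holo_vec x f \<Longrightarrow> holo_vec x g \<Longrightarrow> holo_vec x (\<lambda>y. f y - g y)"
  unfolding holo_vec_def by (auto intro: holo_diff)

lemma holo_vec_smult: "holo x a \<Longrightarrow> holo_vec x f \<Longrightarrow> holo_vec x (\<lambda>y. a y *s f y)"
  unfolding holo_vec_def by (auto intro: holo_mult)

lemma sub_holo: "is_submodule X x M \<Longrightarrow> c \<in> M \<Longrightarrow> holo_vec x c"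
  unfolding is_submodule_def using gm_holo by blast

lemma sub_smult:
  assumes sub: "is_submodule X x M" and c: "c \<in> M" and e: "holo x e"
  shows "(\<lambda>y. e y *s c y) \<in> M"
proof -
  have "(\<lambda>y. e y *s c y) \<in> gen_module X x M"
    by (rule gm_intro[where m=1 and a="\<lambda>_. e" and s="\<lambda>_. c"])
       (use holo_vec_smult[OF e sub_holo[OF sub c]] c e in auto)
  then show ?thesis using sub unfolding is_submodule_def by blast
qed

lemma vecD_in_modD:
  assumes sub: "is_submodule X x M" and c: "c \<in> M"
  shows "vecD c \<in> mod_D X x M"
  unfolding mod_D_def
  by (rule gm_intro[where m=1 and a="\<lambda>_ _. 1" and s="\<lambda>_. vecD c"])
     (use holo_vec_vecD[OF sub_holo[OF sub c]] c in auto)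

lemma core:
  fixes X :: "(complex^'n::finite) set" and M :: "(complex^'n \<Rightarrow> complex^'p::finite) set"
  assumes sub: "is_submodule X x M"
   and e: "\<And>j. j < k \<Longrightarrow> holo x (e j)"
   and c: "\<And>j. j < k \<Longrightarrow> c j \<in> M" and c': "\<And>j. j < k \<Longrightarrow> c' j \<in> M"
  shows "(\<lambda>z. (\<Prod>j<k. e j (pr1 z) - e j (pr2 z)) * detk k (\<lambda>i j. vec_nth (c j (pr1 z)) (r i))
            * detk k (\<lambda>i j. vec_nth (c' j (pr2 z)) (r' i)))
         \<in> minor_ideal (dbl X) (dpt x) (2*k) (mod_D X x M)"
proof -
  define col where "col j = (if j < k then (\<lambda>z. vecD (\<lambda>y. e j y *s c j y) z - e j (pr2 z) *s vecD (c j) z)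
      else vecD (c' (j-k)))" for j
  define R where "R i = (if i < k then Inl (r i) else Inr (r' (i-k)))" for i
  have colM: "col j \<in> mod_D X x M" if "j < 2*k" for j
  proof (cases "j < k")
    case True
    have ec: "(\<lambda>y. e j y *s c j y) \<in> M" using sub_smult[OF sub c e] True by blast
    have hv: "holo_vec (dpt x) (\<lambda>z. vecD (\<lambda>y. e j y *s c j y) z - e j (pr2 z) *s vecD (c j) z)"
      by (intro holo_vec_diff holo_vec_smult holo_vec_vecD holo_pr2_dpt sub_holo[OF sub] e c ec True)
    have "(\<lambda>z. vecD (\<lambda>y. e j y *s c j y) z - e j (pr2 z) *s vecD (c j) z) \<in> mod_D X x M"
      unfolding mod_D_def
      apply (rule gm_intro[where m=2 and a="\<lambda>i z. if i = 0 then 1 else - e j (pr2 z)"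
            and s="\<lambda>i. if i = 0 then vecD (\<lambda>y. e j y *s c j y) else vecD (c j)"])
      using hv ec c[OF True] e[OF True]
      by (auto simp: numeral_2_eq_2 lessThan_Suc less_Suc_eq intro!: holo_neg holo_pr2_dpt)
    then show ?thesis using True by (simp add: col_def)
  next
    case False
    then show ?thesis using vecD_in_modD[OF sub c'[of "j-k"]] that by (simp add: col_def)
  qed
  have hcol: "holo (dpt x) (\<lambda>z. vec_nth (col j z) i)" if "j < 2*k" for i j
    using gm_holo[OF colM[OF that, unfolded mod_D_def]] unfolding holo_vec_def by blast
  have gen: "(\<lambda>z. detk (2*k) (\<lambda>i j. vec_nth (col j z) (R i))) \<in> minor_ideal (dbl X) (dpt x) (2*k) (mod_D X x M)"
    unfolding minor_ideal_def
    by (rule gi_gen) (use colM hcol in \<open>auto intro!: holo_detk\<close>)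
  have eq: "detk (2*k) (\<lambda>i j. vec_nth (col j z) (R i)) =
      (\<Prod>j<k. e j (pr1 z) - e j (pr2 z)) * detk k (\<lambda>i j. vec_nth (c j (pr1 z)) (r i))
            * detk k (\<lambda>i j. vec_nth (c' j (pr2 z)) (r' i))" for z
  proof -
    have "detk (2*k) (\<lambda>i j. vec_nth (col j z) (R i)) = detk (k+k) (\<lambda>i j. vec_nth (col j z) (R i))"
      by (simp add: mult_2)
    also have "\<dots> = detk k (\<lambda>i j. vec_nth (col j z) (R i)) * detk k (\<lambda>i j. vec_nth (col (k+j) z) (R (k+i)))"
      by (rule detk_block) (auto simp: col_def R_def)
    also have "detk k (\<lambda>i j. vec_nth (col j z) (R i)) =
        detk k (\<lambda>i j. (e j (pr1 z) - e j (pr2 z)) * vec_nth (c j (pr1 z)) (r i))"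
      by (rule detk_cong) (auto simp: col_def R_def algebra_simps)
    also have "\<dots> = (\<Prod>j<k. e j (pr1 z) - e j (pr2 z)) * detk k (\<lambda>i j. vec_nth (c j (pr1 z)) (r i))"
      by (rule detk_scale_cols)
    also have "detk k (\<lambda>i j. vec_nth (col (k+j) z) (R (k+i))) = detk k (\<lambda>i j. vec_nth (c' j (pr2 z)) (r' i))"
      by (rule detk_cong) (auto simp: col_def R_def)
    finally show ?thesis .
  qed
  show ?thesis using gen unfolding eq .
qed

lemma germ_eq_cong4:
  assumes "germ_eq X x f f'" "germ_eq X x g g'" "germ_eq X x h h'" "germ_eq X x k k'"
  shows "germ_eq X x (\<lambda>y. F y (f y) (g y) (h y) (k y)) (\<lambda>y. F y (f' y) (g' y) (h' y) (k' y))"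
proof -
  obtain U1 where 1: "open U1" "x \<in> U1" "\<forall>y\<in>X \<inter> U1. f y = f' y" using assms(1) unfolding germ_eq_def by blast
  obtain U2 where 2: "open U2" "x \<in> U2" "\<forall>y\<in>X \<inter> U2. g y = g' y" using assms(2) unfolding germ_eq_def by blast
  obtain U3 where 3: "open U3" "x \<in> U3" "\<forall>y\<in>X \<inter> U3. h y = h' y" using assms(3) unfolding germ_eq_def by blast
  obtain U4 where 4: "open U4" "x \<in> U4" "\<forall>y\<in>X \<inter> U4. k y = k' y" using assms(4) unfolding germ_eq_def by blast
  show ?thesis unfolding germ_eq_def
    by (rule exI[of _ "U1 \<inter> U2 \<inter> U3 \<inter> U4"]) (use 1 2 3 4 in auto)
qed

lemma cross:
  fixes X :: "(complex^'n::finite) set" and M :: "(complex^'n \<Rightarrow> complex^'p::finite) set"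
  assumes sub: "is_submodule X x M"
   and e: "\<And>j. j < k \<Longrightarrow> holo x (e j)"
   and f: "f \<in> minor_ideal X x k M" and g: "g \<in> minor_ideal X x k M"
  shows "(\<lambda>z. (\<Prod>j<k. e j (pr1 z) - e j (pr2 z)) * f (pr1 z) * g (pr2 z))
         \<in> minor_ideal (dbl X) (dpt x) (2*k) (mod_D X x M)"
proof -
  let ?G = "{(\<lambda>y. detk k (\<lambda>i j. vec_nth (c j y) (r i))) | c r. (\<forall>j<k. c j \<in> M)}"
  let ?K = "minor_ideal (dbl X) (dpt x) (2*k) (mod_D X x M)"
  let ?P = "\<lambda>z. (\<Prod>j<k. e j (pr1 z) - e j (pr2 z))"
  obtain m :: nat and \<alpha> D where mD: "\<forall>p<m. holo x (\<alpha> p) \<and> D p \<in> ?G"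
    "germ_eq X x f (\<lambda>y. \<Sum>p<m. \<alpha> p y * D p y)"
    using f unfolding minor_ideal_def gen_ideal_def by blast
  obtain n :: nat and \<beta> D' where nD: "\<forall>q<n. holo x (\<beta> q) \<and> D' q \<in> ?G"
    "germ_eq X x g (\<lambda>y. \<Sum>q<n. \<beta> q y * D' q y)"
    using g unfolding minor_ideal_def gen_ideal_def by blast
  have hP: "holo (dpt x) ?P"
    by (intro holo_prod holo_diff holo_pr1_dpt holo_pr2_dpt e) auto
  have each: "(\<lambda>z. ?P z * D p (pr1 z) * D' q (pr2 z)) \<in> ?K" if pm: "p < m" and qn: "q < n" for p q
  proof -
    obtain c r where D: "D p = (\<lambda>y. detk k (\<lambda>i j. vec_nth (c j y) (r i)))" "\<forall>j<k. c j \<in> M"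
      using mD(1) pm by blast
    obtain c' r' where D': "D' q = (\<lambda>y. detk k (\<lambda>i j. vec_nth (c' j y) (r' i)))" "\<forall>j<k. c' j \<in> M"
      using nD(1) qn by blast
    show ?thesis unfolding D(1) D'(1)
      by (rule core[OF sub e]) (use D D' in auto)
  qed
  have sumK: "(\<lambda>z. \<Sum>p<m. \<Sum>q<n. (\<alpha> p (pr1 z) * \<beta> q (pr2 z)) * (?P z * D p (pr1 z) * D' q (pr2 z))) \<in> ?K"
    unfolding minor_ideal_def
  proof (intro gi_sum)
    fix p q assume "p \<in> {..<m}" "q \<in> {..<n}"
    then show "(\<lambda>z. (\<alpha> p (pr1 z) * \<beta> q (pr2 z)) * (?P z * D p (pr1 z) * D' q (pr2 z)))
       \<in> gen_ideal (dbl X) (dpt x) {\<lambda>y. detk (2 * k) (\<lambda>i j. vec_nth (c j y) (r i)) |c r. \<forall>j<2 * k. c j \<in> mod_D X x M}"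
      using each[of p q, unfolded minor_ideal_def] mD(1) nD(1)
      by (intro gi_smult[of _ "\<lambda>z. \<alpha> p (pr1 z) * \<beta> q (pr2 z)"] holo_mult holo_pr1_dpt holo_pr2_dpt) auto
  qed auto
  have germ: "germ_eq (dbl X) (dpt x) (\<lambda>z. ?P z * f (pr1 z) * g (pr2 z))
     (\<lambda>z. ?P z * (\<Sum>p<m. \<alpha> p (pr1 z) * D p (pr1 z)) * (\<Sum>q<n. \<beta> q (pr2 z) * D' q (pr2 z)))"
    using germ_eq_cong4[OF germ_eq_pr1[OF mD(2)] germ_eq_pr2[OF nD(2)] germ_eq_refl germ_eq_refl,
        of "\<lambda>z u v a b. ?P z * u * v"] by simp
  have alg: "(\<lambda>z. ?P z * (\<Sum>p<m. \<alpha> p (pr1 z) * D p (pr1 z)) * (\<Sum>q<n. \<beta> q (pr2 z) * D' q (pr2 z)))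
     = (\<lambda>z. \<Sum>p<m. \<Sum>q<n. (\<alpha> p (pr1 z) * \<beta> q (pr2 z)) * (?P z * D p (pr1 z) * D' q (pr2 z)))"
  proof (rule ext)
    fix z
    have "?P z * (\<Sum>p<m. \<alpha> p (pr1 z) * D p (pr1 z)) * (\<Sum>q<n. \<beta> q (pr2 z) * D' q (pr2 z))
      = ?P z * (\<Sum>p<m. \<Sum>q<n. (\<alpha> p (pr1 z) * D p (pr1 z)) * (\<beta> q (pr2 z) * D' q (pr2 z)))"
      by (simp only: sum_product mult.assoc)
    also have "\<dots> = (\<Sum>p<m. \<Sum>q<n. ?P z * ((\<alpha> p (pr1 z) * D p (pr1 z)) * (\<beta> q (pr2 z) * D' q (pr2 z))))"
      by (simp only: sum_distrib_left)
    also have "\<dots> = (\<Sum>p<m. \<Sum>q<n. (\<alpha> p (pr1 z) * \<beta> q (pr2 z)) * (?P z * D p (pr1 z) * D' q (pr2 z)))"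
      by (intro sum.cong refl) (simp add: mult_ac)
    finally show "?P z * (\<Sum>p<m. \<alpha> p (pr1 z) * D p (pr1 z)) * (\<Sum>q<n. \<beta> q (pr2 z) * D' q (pr2 z))
      = (\<Sum>p<m. \<Sum>q<n. (\<alpha> p (pr1 z) * \<beta> q (pr2 z)) * (?P z * D p (pr1 z) * D' q (pr2 z)))" .
  qed
  have hT: "holo (dpt x) (\<lambda>z. ?P z * f (pr1 z) * g (pr2 z))"
    by (intro holo_mult hP holo_pr1_dpt holo_pr2_dpt gi_holo[OF f[unfolded minor_ideal_def]]
        gi_holo[OF g[unfolded minor_ideal_def]])
  show ?thesis
    using gi_germ[OF hT germ sumK[folded alg, unfolded minor_ideal_def]] unfolding minor_ideal_def .
qed

section \<open>Two-by-two minors\<close>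

lemma rep_modD:
  fixes X :: "(complex^'n::finite) set" and I :: "(complex^'n \<Rightarrow> complex) set"
  assumes c: "c \<in> mod_D X x (as_module I)"
  obtains m :: nat and a f where "\<forall>i<m. holo (dpt x) (a i) \<and> f i \<in> I"
    "\<And>t. germ_eq (dbl X) (dpt x) (\<lambda>z. vec_nth (c z) (Inl t)) (\<lambda>z. \<Sum>i<m. a i z * f i (pr1 z))"
    "\<And>t. germ_eq (dbl X) (dpt x) (\<lambda>z. vec_nth (c z) (Inr t)) (\<lambda>z. \<Sum>i<m. a i z * f i (pr2 z))"
proof -
  obtain m :: nat and a s where ms: "\<forall>i<m. holo (dpt x) (a i) \<and> s i \<in> vecD ` as_module I"
    "germ_eq (dbl X) (dpt x) c (\<lambda>y. \<Sum>i<m. a i y *s s i y)"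
    using c unfolding mod_D_def gen_module_def by blast
  have "\<forall>i<m. \<exists>f. f \<in> I \<and> s i = vecD (\<lambda>y. vec_lambda (\<lambda>_. f y))"
    using ms(1) unfolding as_module_def by blast
  then obtain f where f: "\<forall>i<m. f i \<in> I \<and> s i = vecD (\<lambda>y. vec_lambda (\<lambda>_. f i y))"
    by metis
  show ?thesis
  proof (rule that)
    show "\<forall>i<m. holo (dpt x) (a i) \<and> f i \<in> I" using ms(1) f by blast
  next
    fix t
    have "germ_eq (dbl X) (dpt x) (\<lambda>z. vec_nth (c z) (Inl t)) (\<lambda>z. vec_nth (\<Sum>i<m. a i z *s s i z) (Inl t))"
      by (rule germ_eq_comp[OF ms(2)])
    also have "(\<lambda>z. vec_nth (\<Sum>i<m. a i z *s s i z) (Inl t)) = (\<lambda>z. \<Sum>i<m. a i z * f i (pr1 z))"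
      using f by (auto intro!: sum.cong)
    finally show "germ_eq (dbl X) (dpt x) (\<lambda>z. vec_nth (c z) (Inl t)) (\<lambda>z. \<Sum>i<m. a i z * f i (pr1 z))" .
  next
    fix t
    have "germ_eq (dbl X) (dpt x) (\<lambda>z. vec_nth (c z) (Inr t)) (\<lambda>z. vec_nth (\<Sum>i<m. a i z *s s i z) (Inr t))"
      by (rule germ_eq_comp[OF ms(2)])
    also have "(\<lambda>z. vec_nth (\<Sum>i<m. a i z *s s i z) (Inr t)) = (\<lambda>z. \<Sum>i<m. a i z * f i (pr2 z))"
      using f by (auto intro!: sum.cong)
    finally show "germ_eq (dbl X) (dpt x) (\<lambda>z. vec_nth (c z) (Inr t)) (\<lambda>z. \<Sum>i<m. a i z * f i (pr2 z))" .
  qed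
qed

lemma alg_bilin:
  fixes P :: complex
  shows "P * ((\<Sum>i<m. A i) * (\<Sum>j<n. B j) - (\<Sum>j<n. C j) * (\<Sum>i<m. D i))
     = (\<Sum>i<m. \<Sum>j<n. P * (A i * B j - C j * D i))"
proof -
  have 1: "(\<Sum>i<m. A i) * (\<Sum>j<n. B j) = (\<Sum>i<m. \<Sum>j<n. A i * B j)"
    by (rule sum_product)
  have 2: "(\<Sum>j<n. C j) * (\<Sum>i<m. D i) = (\<Sum>i<m. \<Sum>j<n. C j * D i)"
    by (subst sum_product) (rule sum.swap)
  show ?thesis unfolding 1 2
    by (simp only: sum_subtractf[symmetric] sum_distrib_left)
qed

lemma two_minor:
  fixes X :: "(complex^'n::finite) set" and I :: "(complex^'n \<Rightarrow> complex) set"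
  assumes H: "\<And>f g. f \<in> I \<Longrightarrow> g \<in> I \<Longrightarrow>
      (\<lambda>z. P z * (f (pr1 z) * g (pr2 z) - g (pr1 z) * f (pr2 z))) \<in> gen_ideal (dbl X) (dpt x) R"
    and hP: "holo (dpt x) P"
    and c: "\<And>j. j < 2 \<Longrightarrow> c j \<in> mod_D X x (as_module I)"
  shows "(\<lambda>z. P z * detk 2 (\<lambda>i j. vec_nth (c j z) (r i))) \<in> gen_ideal (dbl X) (dpt x) R"
proof -
  let ?K = "gen_ideal (dbl X) (dpt x) R"
  obtain m :: nat and a f where A: "\<forall>i<m. holo (dpt x) (a i) \<and> f i \<in> I"
    "\<And>t. germ_eq (dbl X) (dpt x) (\<lambda>z. vec_nth (c 0 z) (Inl t)) (\<lambda>z. \<Sum>i<m. a i z * f i (pr1 z))"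
    "\<And>t. germ_eq (dbl X) (dpt x) (\<lambda>z. vec_nth (c 0 z) (Inr t)) (\<lambda>z. \<Sum>i<m. a i z * f i (pr2 z))"
    using rep_modD[OF c[of 0]] by auto
  obtain n :: nat and b g where B: "\<forall>i<n. holo (dpt x) (b i) \<and> g i \<in> I"
    "\<And>t. germ_eq (dbl X) (dpt x) (\<lambda>z. vec_nth (c 1 z) (Inl t)) (\<lambda>z. \<Sum>i<n. b i z * g i (pr1 z))"
    "\<And>t. germ_eq (dbl X) (dpt x) (\<lambda>z. vec_nth (c 1 z) (Inr t)) (\<lambda>z. \<Sum>i<n. b i z * g i (pr2 z))"
    using rep_modD[OF c[of 1]] by auto
  have hc: "holo (dpt x) (\<lambda>z. vec_nth (c j z) t)" if "j < 2" for j t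
    using gm_holo[OF c[OF that, unfolded mod_D_def]] unfolding holo_vec_def by blast
  have hT: "holo (dpt x) (\<lambda>z. P z * detk 2 (\<lambda>i j. vec_nth (c j z) (r i)))"
    by (intro holo_mult hP holo_detk hc)
  have det: "detk 2 (\<lambda>i j. vec_nth (c j z) (r i)) =
     vec_nth (c 0 z) (r 0) * vec_nth (c 1 z) (r 1) - vec_nth (c 1 z) (r 0) * vec_nth (c 0 z) (r 1)" for z
    by (simp add: detk2)
  consider (eq) "r 0 = r 1" | (lr) u v where "r 0 = Inl u" "r 1 = Inr v" | (rl) u v where "r 0 = Inr u" "r 1 = Inl v"
    by (metis num1_eq_iff sumE)
  then show ?thesis
  proof cases
    case eq
    then have "(\<lambda>z. P z * detk 2 (\<lambda>i j. vec_nth (c j z) (r i))) = (\<lambda>z. 0)"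
      unfolding det by simp
    then show ?thesis using gi_zero by metis
  next
    case lr
    have germ: "germ_eq (dbl X) (dpt x) (\<lambda>z. P z * detk 2 (\<lambda>i j. vec_nth (c j z) (r i)))
      (\<lambda>z. P z * ((\<Sum>i<m. a i z * f i (pr1 z)) * (\<Sum>j<n. b j z * g j (pr2 z))
                  - (\<Sum>j<n. b j z * g j (pr1 z)) * (\<Sum>i<m. a i z * f i (pr2 z))))"
      unfolding det lr
      by (rule germ_eq_cong4[OF A(2) B(3) B(2) A(3), of "\<lambda>z p q s t. P z * (p * q - s * t)"])
    have sumK: "(\<lambda>z. \<Sum>i<m. \<Sum>j<n. (a i z * b j z) *
          (P z * (f i (pr1 z) * g j (pr2 z) - g j (pr1 z) * f i (pr2 z)))) \<in> ?K"
    proof (intro gi_sum)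
      fix i j assume "i \<in> {..<m}" "j \<in> {..<n}"
      then show "(\<lambda>z. (a i z * b j z) * (P z * (f i (pr1 z) * g j (pr2 z) - g j (pr1 z) * f i (pr2 z)))) \<in> ?K"
        using A(1) B(1) H
        by (intro gi_smult[of _ "\<lambda>z. a i z * b j z"] holo_mult) auto
    qed auto
    have alg: "(\<lambda>z. P z * ((\<Sum>i<m. a i z * f i (pr1 z)) * (\<Sum>j<n. b j z * g j (pr2 z))
                  - (\<Sum>j<n. b j z * g j (pr1 z)) * (\<Sum>i<m. a i z * f i (pr2 z))))
      = (\<lambda>z. \<Sum>i<m. \<Sum>j<n. (a i z * b j z) *
          (P z * (f i (pr1 z) * g j (pr2 z) - g j (pr1 z) * f i (pr2 z))))"
      unfolding alg_bilin by (intro ext sum.cong refl) (simp add: algebra_simps)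
    show ?thesis using gi_germ[OF hT germ] sumK alg by simp
  next
    case rl
    have germ: "germ_eq (dbl X) (dpt x) (\<lambda>z. P z * detk 2 (\<lambda>i j. vec_nth (c j z) (r i)))
      (\<lambda>z. P z * ((\<Sum>i<m. a i z * f i (pr2 z)) * (\<Sum>j<n. b j z * g j (pr1 z))
                  - (\<Sum>j<n. b j z * g j (pr2 z)) * (\<Sum>i<m. a i z * f i (pr1 z))))"
      unfolding det rl
      by (rule germ_eq_cong4[OF A(3) B(2) B(3) A(2), of "\<lambda>z p q s t. P z * (p * q - s * t)"])
    have sumK: "(\<lambda>z. \<Sum>i<m. \<Sum>j<n. (a i z * b j z) *
          (P z * (g j (pr1 z) * f i (pr2 z) - f i (pr1 z) * g j (pr2 z)))) \<in> ?K"
    proof (intro gi_sum)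
      fix i j assume "i \<in> {..<m}" "j \<in> {..<n}"
      then show "(\<lambda>z. (a i z * b j z) * (P z * (g j (pr1 z) * f i (pr2 z) - f i (pr1 z) * g j (pr2 z)))) \<in> ?K"
        using A(1) B(1) H
        by (intro gi_smult[of _ "\<lambda>z. a i z * b j z"] holo_mult) auto
    qed auto
    have alg: "(\<lambda>z. P z * ((\<Sum>i<m. a i z * f i (pr2 z)) * (\<Sum>j<n. b j z * g j (pr1 z))
                  - (\<Sum>j<n. b j z * g j (pr2 z)) * (\<Sum>i<m. a i z * f i (pr1 z))))
      = (\<lambda>z. \<Sum>i<m. \<Sum>j<n. (a i z * b j z) *
          (P z * (g j (pr1 z) * f i (pr2 z) - f i (pr1 z) * g j (pr2 z))))"
      unfolding alg_bilin by (intro ext sum.cong refl) (simp add: algebra_simps)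
    show ?thesis using gi_germ[OF hT germ] sumK alg by simp
  qed
qed

lemma partA_gen:
  fixes X :: "(complex^'n::finite) set" and I :: "(complex^'n \<Rightarrow> complex) set"
    and N :: "(complex^('n+'n) \<Rightarrow> complex^'q::finite) set"
  assumes H: "\<And>P f g. P \<in> mon j \<Longrightarrow> f \<in> I \<Longrightarrow> g \<in> I \<Longrightarrow>
     (\<lambda>z. P z * (f (pr1 z) * g (pr2 z) - g (pr1 z) * f (pr2 z))) \<in> minor_ideal (dbl X) (dpt x) K2 N"
  shows "ideal_mult (dbl X) (dpt x) (ideal_pow (dbl X) (dpt x) (I_Delta X x) j)
      (minor_ideal (dbl X) (dpt x) 2 (mod_D X x (as_module I))) \<subseteq> minor_ideal (dbl X) (dpt x) K2 N"
  unfolding ideal_mult_def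
proof (rule gi_sub[where S="{(\<lambda>y. detk K2 (\<lambda>i j. vec_nth (c j y) (r i))) | c r. (\<forall>j<K2. c j \<in> N)}", folded minor_ideal_def], clarify)
  fix \<phi> \<psi> assume \<phi>: "\<phi> \<in> ideal_pow (dbl X) (dpt x) (I_Delta X x) j"
    and \<psi>: "\<psi> \<in> minor_ideal (dbl X) (dpt x) 2 (mod_D X x (as_module I))"
  show "(\<lambda>y. \<phi> y * \<psi> y) \<in> minor_ideal (dbl X) (dpt x) K2 N"
    unfolding minor_ideal_def
  proof (rule gi_prod[OF _ _ _ _ \<psi>[unfolded minor_ideal_def]])
    show "\<phi> \<in> gen_ideal (dbl X) (dpt x) (mon j)" using pow_sub \<phi> by blast
  next
    fix s :: "complex^('n+'n) \<Rightarrow> complex" assume "s \<in> mon j" then show "holo (dpt x) s" by (rule holo_mon)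
  next
    fix t :: "complex^('n+'n) \<Rightarrow> complex"
    assume "t \<in> {(\<lambda>y. detk 2 (\<lambda>i j. vec_nth (c j y) (r i))) | c r. (\<forall>j<2. c j \<in> mod_D X x (as_module I))}"
    then obtain c r where t: "t = (\<lambda>y. detk 2 (\<lambda>i j. vec_nth (c j y) (r i)))" "\<forall>j<2. c j \<in> mod_D X x (as_module I)"
      by blast
    have "holo (dpt x) (\<lambda>z. vec_nth (c j z) i)" if "j < 2" for i j
      using gm_holo[OF t(2)[rule_format, OF that, unfolded mod_D_def]] unfolding holo_vec_def by blast
    then show "holo (dpt x) t" unfolding t(1) by (intro holo_detk)
  next
    fix s t :: "complex^('n+'n) \<Rightarrow> complex" assume s: "s \<in> mon j"
      and "t \<in> {(\<lambda>y. detk 2 (\<lambda>i j. vec_nth (c j y) (r i))) | c r. (\<forall>j<2. c j \<in> mod_D X x (as_module I))}"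
    then obtain c r where t: "t = (\<lambda>y. detk 2 (\<lambda>i j. vec_nth (c j y) (r i)))" "\<forall>j<2. c j \<in> mod_D X x (as_module I)"
      by blast
    show "(\<lambda>y. s y * t y) \<in> gen_ideal (dbl X) (dpt x) {(\<lambda>y. detk K2 (\<lambda>i j. vec_nth (c j y) (r i))) | c r. (\<forall>j<K2. c j \<in> N)}"
      unfolding t(1)
      by (rule two_minor[OF H[OF s, unfolded minor_ideal_def] holo_mon[OF s]]) (use t(2) in auto)
  qed
qed

lemma mon_eq:
  assumes "P \<in> mon j"
  obtains \<iota> where "P = (\<lambda>z. \<Prod>l<j. (\<lambda>y. vec_nth y (\<iota> l)) (pr1 z) - (\<lambda>y. vec_nth y (\<iota> l)) (pr2 z))"
  using assms unfolding mon_def pr1_def pr2_def by auto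

lemma anti_a:
  fixes X :: "(complex^'n::finite) set" and M :: "(complex^'n \<Rightarrow> complex^'p::finite) set"
  assumes sub: "is_submodule X x M" and P: "P \<in> mon k"
   and f: "f \<in> minor_ideal X x k M" and g: "g \<in> minor_ideal X x k M"
  shows "(\<lambda>z. P z * (f (pr1 z) * g (pr2 z) - g (pr1 z) * f (pr2 z))) \<in> minor_ideal (dbl X) (dpt x) (2*k) (mod_D X x M)"
proof -
  obtain \<iota> where P': "P = (\<lambda>z. \<Prod>l<k. (\<lambda>y. vec_nth y (\<iota> l)) (pr1 z) - (\<lambda>y. vec_nth y (\<iota> l)) (pr2 z))"
    using mon_eq[OF P] by blast
  have 1: "(\<lambda>z. P z * f (pr1 z) * g (pr2 z)) \<in> minor_ideal (dbl X) (dpt x) (2*k) (mod_D X x M)"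
    unfolding P' by (rule cross[OF sub _ f g]) simp
  have 2: "(\<lambda>z. P z * g (pr1 z) * f (pr2 z)) \<in> minor_ideal (dbl X) (dpt x) (2*k) (mod_D X x M)"
    unfolding P' by (rule cross[OF sub _ g f]) simp
  show ?thesis using gi_diff[OF 1[unfolded minor_ideal_def] 2[unfolded minor_ideal_def]]
    unfolding minor_ideal_def by (simp add: algebra_simps)
qed

lemma principal_rep:
  assumes "f \<in> gen_ideal X x {g0}"
  obtains A where "holo x A" "germ_eq X x f (\<lambda>y. A y * g0 y)"
proof -
  obtain m :: nat and a s where ms: "\<forall>i<m. holo x (a i) \<and> s i \<in> {g0}"
    "germ_eq X x f (\<lambda>y. \<Sum>i<m. a i y * s i y)"
    using assms unfolding gen_ideal_def by blast
  have "(\<lambda>y. \<Sum>i<m. a i y * s i y) = (\<lambda>y. (\<Sum>i<m. a i y) * g0 y)"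
    using ms(1) by (auto simp: sum_distrib_right intro!: sum.cong)
  moreover have "holo x (\<lambda>y. \<Sum>i<m. a i y)" using ms(1) by (intro holo_sum) auto
  ultimately show ?thesis using that ms(2) by metis
qed

lemma anti_b:
  fixes X :: "(complex^'n::finite) set" and M :: "(complex^'n \<Rightarrow> complex^'p::finite) set"
  assumes sub: "is_submodule X x M" and k: "k = Suc k'" and P: "P \<in> mon k'"
   and pr: "principal_ideal X x (minor_ideal X x k M)"
   and f: "f \<in> minor_ideal X x k M" and f': "f' \<in> minor_ideal X x k M"
  shows "(\<lambda>z. P z * (f (pr1 z) * f' (pr2 z) - f' (pr1 z) * f (pr2 z))) \<in> minor_ideal (dbl X) (dpt x) (2*k) (mod_D X x M)"
proof -
  let ?K = "minor_ideal (dbl X) (dpt x) (2*k) (mod_D X x M)"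
  obtain g0 where hg0: "holo x g0" and Ieq: "minor_ideal X x k M = gen_ideal X x {g0}"
    using pr unfolding principal_ideal_def by blast
  have g0I: "g0 \<in> minor_ideal X x k M" unfolding Ieq by (rule gi_gen) (auto simp: hg0)
  obtain A where hA: "holo x A" and fA: "germ_eq X x f (\<lambda>y. A y * g0 y)"
    using principal_rep f[unfolded Ieq] by blast
  obtain B where hB: "holo x B" and fB: "germ_eq X x f' (\<lambda>y. B y * g0 y)"
    using principal_rep f'[unfolded Ieq] by blast
  obtain \<iota> where P': "P = (\<lambda>z. \<Prod>l<k'. (\<lambda>y. vec_nth y (\<iota> l)) (pr1 z) - (\<lambda>y. vec_nth y (\<iota> l)) (pr2 z))"
    using mon_eq[OF P] by blast
  define E where "E h j = (if j = 0 then h else (\<lambda>y. vec_nth y (\<iota> (j - 1))))" for h :: "complex^'n \<Rightarrow> complex" and j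
  have Q: "(\<lambda>z. (h (pr1 z) - h (pr2 z)) * P z * g0 (pr1 z) * g0 (pr2 z)) \<in> ?K" if hh: "holo x h" for h
  proof -
    have "(\<lambda>z. (\<Prod>j<k. E h j (pr1 z) - E h j (pr2 z)) * g0 (pr1 z) * g0 (pr2 z)) \<in> ?K"
      by (rule cross[OF sub _ g0I g0I]) (auto simp: E_def hh)
    moreover have "(\<Prod>j<k. E h j (pr1 z) - E h j (pr2 z)) = (h (pr1 z) - h (pr2 z)) * P z" for z
      unfolding k prod.lessThan_Suc_shift P' by (simp add: E_def)
    ultimately show ?thesis by simp
  qed
  have T: "(\<lambda>z. B (pr2 z) * ((A (pr1 z) - A (pr2 z)) * P z * g0 (pr1 z) * g0 (pr2 z))
          - A (pr2 z) * ((B (pr1 z) - B (pr2 z)) * P z * g0 (pr1 z) * g0 (pr2 z))) \<in> ?K"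
    unfolding minor_ideal_def
    by (intro gi_diff gi_smult holo_pr2_dpt hA hB Q[unfolded minor_ideal_def])
  have germ: "germ_eq (dbl X) (dpt x) (\<lambda>z. P z * (f (pr1 z) * f' (pr2 z) - f' (pr1 z) * f (pr2 z)))
     (\<lambda>z. P z * ((A (pr1 z) * g0 (pr1 z)) * (B (pr2 z) * g0 (pr2 z)) - (B (pr1 z) * g0 (pr1 z)) * (A (pr2 z) * g0 (pr2 z))))"
    by (rule germ_eq_cong4[OF germ_eq_pr1[OF fA] germ_eq_pr2[OF fB] germ_eq_pr1[OF fB] germ_eq_pr2[OF fA],
          of "\<lambda>z p q s t. P z * (p * q - s * t)"])
  have alg: "(\<lambda>z. P z * ((A (pr1 z) * g0 (pr1 z)) * (B (pr2 z) * g0 (pr2 z)) - (B (pr1 z) * g0 (pr1 z)) * (A (pr2 z) * g0 (pr2 z))))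
     = (\<lambda>z. B (pr2 z) * ((A (pr1 z) - A (pr2 z)) * P z * g0 (pr1 z) * g0 (pr2 z))
          - A (pr2 z) * ((B (pr1 z) - B (pr2 z)) * P z * g0 (pr1 z) * g0 (pr2 z)))"
    by (rule ext) (simp add: algebra_simps)
  have hT: "holo (dpt x) (\<lambda>z. P z * (f (pr1 z) * f' (pr2 z) - f' (pr1 z) * f (pr2 z)))"
    using f f' unfolding minor_ideal_def
    by (intro holo_mult holo_diff holo_mon[OF P] holo_pr1_dpt holo_pr2_dpt gi_holo)
  show ?thesis
    using gi_germ[OF hT germ T[folded alg, unfolded minor_ideal_def]] unfolding minor_ideal_def .
qed

theorem lemma3p3:
  fixes X :: "(complex^'n::finite) set" and x :: "complex^'n"
    and M :: "(complex^'n \<Rightarrow> complex^'p::finite) set" and k :: nat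
  assumes "analytic_variety X" and "x \<in> X" and "is_submodule X x M"
  shows "ideal_mult (dbl X) (dpt x) (ideal_pow (dbl X) (dpt x) (I_Delta X x) k)
           (minor_ideal (dbl X) (dpt x) 2 (mod_D X x (as_module (minor_ideal X x k M))))
         \<subseteq> minor_ideal (dbl X) (dpt x) (2 * k) (mod_D X x M)
       \<and> (principal_ideal X x (minor_ideal X x k M) \<longrightarrow>
         ideal_mult (dbl X) (dpt x) (ideal_pow (dbl X) (dpt x) (I_Delta X x) (k - 1))
           (minor_ideal (dbl X) (dpt x) 2 (mod_D X x (as_module (minor_ideal X x k M))))
         \<subseteq> minor_ideal (dbl X) (dpt x) (2 * k) (mod_D X x M))"
proof -
  have a: "ideal_mult (dbl X) (dpt x) (ideal_pow (dbl X) (dpt x) (I_Delta X x) k)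
           (minor_ideal (dbl X) (dpt x) 2 (mod_D X x (as_module (minor_ideal X x k M))))
         \<subseteq> minor_ideal (dbl X) (dpt x) (2 * k) (mod_D X x M)"
    by (rule partA_gen) (rule anti_a[OF assms(3)])
  moreover have "ideal_mult (dbl X) (dpt x) (ideal_pow (dbl X) (dpt x) (I_Delta X x) (k - 1))
           (minor_ideal (dbl X) (dpt x) 2 (mod_D X x (as_module (minor_ideal X x k M))))
         \<subseteq> minor_ideal (dbl X) (dpt x) (2 * k) (mod_D X x M)"
    if pr: "principal_ideal X x (minor_ideal X x k M)"
  proof (cases k)
    case 0
    then show ?thesis using a by simp
  next
    case (Suc k')
    show ?thesis
      by (rule partA_gen) (rule anti_b[OF assms(3) Suc _ pr], simp_all add: Suc)
  qed
  ultimately show ?thesis by blast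
qed

end
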